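(* Let $A, B, C, F \in \mathbb{R}^{n\times n}$ and consider the matrix equation $$AX + B\lvert CX\rvert = F$$ in the unknown $X \in \mathbb{R}^{n\times n}$. This equation has exactly one solution if any one of the following conditions is satisfied: (i) $C$ is invertible and $\sigma_{\max}(\lvert B\rvert) < \sigma_{\min}(AC^{-1})$; (ii) $C$ is invertible and $\sigma_{\max}(B) < \sigma_{\min}(AC^{-1})$; (iii) $A$ is invertible and $\rho\left(\lvert CA^{-1}\rvert\cdot\lvert B\rvert\right) < 1$; (iv) $A$ is invertible and $\sigma_{\max}(CA^{-1}B) < 1$.
   Context: $\lvert M\rvert$ is the entrywise absolute value of a matrix $M$; $\sigma_{\max}(\cdot)$ and $\sigma_{\min}(\cdot)$ denote the largest and smallest singular values of a real square matrix; $\rho(\cdot)$ is the spectral radius. *)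

theory Defs
  imports "HOL-Analysis.Analysis"
begin

definition mat_abs :: "real^'n^'m \<Rightarrow> real^'n^'m" where
  "mat_abs M = (\<chi> i j. \<bar>M $ i $ j\<bar>)"

definition real_eigenvalues :: "real^'n^'n \<Rightarrow> real set" where
  "real_eigenvalues M = {c. \<exists>v. v \<noteq> 0 \<and> M *v v = c *\<^sub>R v}"

definition sigma_max :: "real^'n^'n \<Rightarrow> real" where
  "sigma_max M = sqrt (Max (real_eigenvalues (transpose M ** M)))"

definition sigma_min :: "real^'n^'n \<Rightarrow> real" where
  "sigma_min M = sqrt (Min (real_eigenvalues (transpose M ** M)))"

definition complexify :: "real^'n^'n \<Rightarrow> complex^'n^'n" where
  "complexify M = (\<chi> i j. complex_of_real (M $ i $ j))"

definition complex_eigenvalues :: "real^'n^'n \<Rightarrow> complex set" where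
  "complex_eigenvalues M = {c. \<exists>v::complex^'n. v \<noteq> 0 \<and> complexify M *v v = c *s v}"

definition spectral_radius :: "real^'n^'n \<Rightarrow> real" where
  "spectral_radius M = Max (cmod ` complex_eigenvalues M)"

end

theory Submission
  imports Defs "HOL-Computational_Algebra.Polynomial"
begin

definition vabs :: "real^'n \<Rightarrow> real^'n" where "vabs v = (\<chi> i. \<bar>v$i\<bar>)"

lemma vabs_nth[simp]: "vabs v $ i = \<bar>v$i\<bar>" by (simp add: vabs_def)

lemma vabs_lip: "norm (vabs a - vabs b) \<le> norm (a - b)"
  by (rule norm_le_componentwise_cart) (simp add: abs_triangle_ineq3)

lemma norm_vabs[simp]: "norm (vabs a) = norm a"
  by (intro antisym norm_le_componentwise_cart) simp_all

lemma mv_nth: "(M *v w) $ i = (\<Sum>j\<in>UNIV. M$i$j * w$j)"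
  by (simp add: matrix_vector_mult_def)

lemma mv_mono:
  fixes P :: "real^'n^'m"
  assumes "\<forall>i j. 0 \<le> P$i$j" "\<forall>j. a$j \<le> b$j"
  shows "(P *v a)$i \<le> (P *v b)$i"
  unfolding mv_nth by (rule Groups_Big.sum_mono) (simp add: assms mult_left_mono)

lemma abs_mv: "\<bar>(M *v w)$i\<bar> \<le> (mat_abs M *v vabs w)$i"
  unfolding mv_nth mat_abs_def
  by (rule order_trans[OF sum_abs]) (simp add: abs_mult)

lemma mat_abs_nonneg: "0 \<le> mat_abs M $ i $ j"
  by (simp add: mat_abs_def)

lemma fp_contr:
  fixes M :: "real^'n^'n"
  assumes "0 \<le> q" "q < 1" "\<forall>w. norm (M *v w) \<le> q * norm w"
  shows "\<exists>!z. z = g - M *v vabs z"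
proof -
  have "\<exists>!z. (\<lambda>z. g - M *v vabs z) z = z"
  proof (rule banach_fix_type[OF assms(1,2)], intro allI)
    fix x y :: "real^'n"
    have "dist (g - M *v vabs x) (g - M *v vabs y) = norm (M *v (vabs y - vabs x))"
      by (simp add: dist_norm matrix_vector_mult_diff_distrib algebra_simps)
    also have "\<dots> \<le> q * norm (vabs y - vabs x)" using assms(3) by blast
    also have "\<dots> \<le> q * norm (y - x)" by (rule mult_left_mono[OF vabs_lip assms(1)])
    finally show "dist (g - M *v vabs x) (g - M *v vabs y) \<le> q * dist x y"
      by (simp add: dist_norm norm_minus_commute)
  qed
  then show ?thesis by metis
qed

lemma vabs_cont: "continuous_on S (vabs :: real^'n \<Rightarrow> _)"
  unfolding vabs_def by (intro continuous_on_vec_lambda continuous_intros)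

lemma fpmap_cont: "continuous_on S (\<lambda>z. g - (M::real^'n^'n) *v vabs z)"
  by (intro continuous_on_diff continuous_on_const
        linear_continuous_on_compose[OF vabs_cont] matrix_vector_mul_linear)

lemma max_ratio:
  fixes d u :: "real^'n"
  assumes "\<forall>i. 0 < u$i"
  obtains t i0 where "\<forall>j. d$j \<le> t * u$j" "d$i0 = t * u$i0"
proof -
  define t where "t = Max (range (\<lambda>i. d$i / u$i))"
  have fin: "finite (range (\<lambda>i. d$i / u$i))" by simp
  have "t \<in> range (\<lambda>i. d$i / u$i)" unfolding t_def by (rule Max_in[OF fin]) simp
  then obtain i0 where i0: "t = d$i0 / u$i0" by auto
  have "d$j \<le> t * u$j" for j
  proof -
    have "d$j / u$j \<le> t" unfolding t_def by (rule Max_ge[OF fin]) simp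
    then show ?thesis using assms by (simp add: divide_le_eq)
  qed
  moreover have "d$i0 = t * u$i0" using i0 assms by (simp add: less_imp_neq[symmetric])
  ultimately show ?thesis using that by blast
qed

lemma fp_pos:
  fixes M P :: "real^'n^'n"
  assumes P0: "\<forall>i j. 0 \<le> P$i$j"
    and dom: "\<forall>w i. \<bar>(M *v w)$i\<bar> \<le> (P *v vabs w)$i"
    and u0: "\<forall>i. 0 < u$i" and uP: "\<forall>i. (P *v u)$i < u$i"
  shows "\<exists>!z. z = g - M *v vabs z"
proof -
 have ex: "\<exists>z. z = g - M *v vabs z"
 proof -
  define f where "f z = g - M *v vabs z" for z
  define R where "R = Max (range (\<lambda>i. \<bar>g$i\<bar> / (u$i - (P *v u)$i)))"
  have finR: "finite (range (\<lambda>i. \<bar>g$i\<bar> / (u$i - (P *v u)$i)))" by simp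
  have gR: "\<bar>g$i\<bar> \<le> R * (u$i - (P *v u)$i)" for i
  proof -
    have "\<bar>g$i\<bar> / (u$i - (P *v u)$i) \<le> R" unfolding R_def by (rule Max_ge[OF finR]) simp
    then show ?thesis using uP[rule_format, of i] by (simp add: divide_le_eq)
  qed
  have R0: "0 \<le> R"
  proof (rule ccontr)
    assume "\<not> 0 \<le> R"
    then have "R * (u$k - (P *v u)$k) < 0" for k using uP[rule_format, of k] by (simp add: mult_neg_pos)
    then show False using gR[of undefined] by (smt (verit) abs_ge_zero)
  qed
  define S where "S = cbox (- (R *\<^sub>R u)) (R *\<^sub>R u)"
  have memS: "z \<in> S \<longleftrightarrow> (\<forall>i. \<bar>z$i\<bar> \<le> R * u$i)" for z
    unfolding S_def mem_box_cart by (simp add: abs_le_iff minus_le_iff conj_commute)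
  have "f ` S \<subseteq> S"
  proof
    fix y assume "y \<in> f ` S"
    then obtain z where z: "z \<in> S" "y = f z" by auto
    have "\<bar>y$i\<bar> \<le> R * u$i" for i
    proof -
      have "\<bar>y$i\<bar> \<le> \<bar>g$i\<bar> + \<bar>(M *v vabs z)$i\<bar>" unfolding z f_def by simp
      also have "\<dots> \<le> \<bar>g$i\<bar> + (P *v vabs (vabs z))$i" using dom by (simp add: add_left_mono)
      also have "(P *v vabs (vabs z))$i \<le> (P *v (R *\<^sub>R u))$i"
        by (rule mv_mono[OF P0]) (use z(1) memS in auto)
      also have "(P *v (R *\<^sub>R u))$i = R * (P *v u)$i"
        by (simp add: matrix_vector_mult_scaleR)
      finally show ?thesis using gR[of i] by (simp add: algebra_simps)
    qed
    then show "y \<in> S" using memS by blast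
  qed
  moreover have "continuous_on S f" unfolding f_def by (rule fpmap_cont)
  moreover have "0 \<in> S" using memS R0 u0 by (simp add: less_imp_le)
  ultimately have fS: "f \<in> S \<rightarrow> S" "continuous_on S f" "S \<noteq> {}" by auto
  have cS: "compact S" "convex S" unfolding S_def by auto
  obtain z where "z \<in> S" "f z = z"
    using brouwer[OF cS fS(3) fS(2) fS(1)] by blast
  then show ?thesis unfolding f_def by metis
 qed
 have uq: "z1 = z2" if h1: "z1 = g - M *v vabs z1" and h2: "z2 = g - M *v vabs z2" for z1 z2
 proof -
  define d where "d = vabs (z1 - z2)"
  have dle: "d$i \<le> (P *v d)$i" for i
  proof -
    from h1 h2 have "z1 - z2 = (g - M *v vabs z1) - (g - M *v vabs z2)"
      by (rule arg_cong2[where f="(-)"])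
    also have "\<dots> = M *v (vabs z2 - vabs z1)" by (simp add: matrix_vector_mult_diff_distrib)
    finally have "z1 - z2 = M *v (vabs z2 - vabs z1)" .
    then have "d$i = \<bar>(M *v (vabs z2 - vabs z1))$i\<bar>" unfolding d_def by simp
    also have "\<dots> \<le> (P *v vabs (vabs z2 - vabs z1))$i" using dom by blast
    also have "\<dots> \<le> (P *v d)$i"
      by (rule mv_mono[OF P0]) (auto simp: d_def abs_triangle_ineq3 abs_minus_commute)
    finally show ?thesis .
  qed
  obtain t i0 where t: "\<forall>j. d$j \<le> t * u$j" "d$i0 = t * u$i0" using max_ratio[OF u0] by blast
  have t0: "0 \<le> t"
  proof (rule ccontr)
    assume "\<not> 0 \<le> t"
    then have "t * u$i0 < 0" using u0 by (simp add: mult_neg_pos)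
    then show False using t(2) unfolding d_def by simp
  qed
  have "t * u$i0 \<le> (P *v d)$i0" using dle t(2) by metis
  also have "\<dots> \<le> (P *v (t *\<^sub>R u))$i0" by (rule mv_mono[OF P0]) (use t in auto)
  also have "\<dots> = t * (P *v u)$i0" by (simp add: matrix_vector_mult_scaleR)
  finally have tt: "t * u$i0 \<le> t * (P *v u)$i0" .
  have "t = 0"
  proof (rule ccontr)
    assume "t \<noteq> 0" then have "0 < t" using t0 by simp
    then have "u$i0 \<le> (P *v u)$i0" using tt by simp
    then show False using uP by (simp add: not_le[symmetric])
  qed
  then have "d$j \<le> 0" for j using t(1) by simp
  then have "(z1 - z2)$j = 0" for j unfolding d_def by (metis abs_le_zero_iff vabs_nth)
  then show "z1 = z2" by (simp add: vec_eq_iff)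
 qed
 show ?thesis using ex uq by blast
qed

lemma det_poly:
  fixes N :: "'a::field^'n^'n"
  shows "\<exists>p. \<forall>c. poly p c = det (N - mat c)"
proof -
  define p where "p = (\<Sum>q\<in>{q. q permutes (UNIV::'n set)}. smult (of_int (sign q))
      (\<Prod>i\<in>UNIV. [:N$i$(q i), - (if i = q i then 1 else 0):]))"
  have "poly p c = det (N - mat c)" for c
    unfolding p_def det_def poly_sum poly_smult poly_prod
    by (intro sum.cong refl arg_cong2[where f="(*)"] prod.cong) (auto simp: mat_def)
  then show ?thesis by blast
qed

lemma mat_mv: "(mat c :: 'a::comm_semiring_1^'n^'n) *v v = c *s v"
proof -
  have "(\<Sum>j\<in>UNIV. (if i = j then c else 0) * v$j) = (\<Sum>j\<in>UNIV. if i = j then c * v$j else 0)" for i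
    by (rule sum.cong) auto
  then show ?thesis by (simp add: vec_eq_iff mv_nth mat_def)
qed

lemma eig_det:
  fixes N :: "'a::field^'n^'n"
  assumes "v \<noteq> 0" "N *v v = c *s v"
  shows "det (N - mat c) = 0"
proof -
  have "(N - mat c) *v v = 0"
    using assms(2) by (simp add: matrix_vector_mult_diff_rdistrib mat_mv)
  then have "\<not> inj ((*v) (N - mat c))" using assms(1)
    by (metis injD matrix_vector_mult_0_right)
  then show ?thesis using inj_matrix_vector_mult invertible_det_nz by blast
qed

lemma eig_bound:
  fixes N :: "complex^'n^'n"
  assumes "v \<noteq> 0" "N *v v = c *s v"
  shows "cmod c \<le> (\<Sum>i\<in>UNIV. \<Sum>j\<in>UNIV. cmod (N$i$j))"
proof -
  define K where "K = (\<Sum>i\<in>UNIV. \<Sum>j\<in>UNIV. cmod (N$i$j))"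
  have fin: "finite (range (\<lambda>j. cmod (v$j)))" by simp
  have "Max (range (\<lambda>j. cmod (v$j))) \<in> range (\<lambda>j. cmod (v$j))" by (rule Max_in[OF fin]) simp
  then obtain j0 where j0: "Max (range (\<lambda>j. cmod (v$j))) = cmod (v$j0)" by blast
  have vj: "cmod (v$j) \<le> cmod (v$j0)" for j using Max_ge[OF fin, of "cmod (v$j)"] j0 by auto
  have "v$j0 \<noteq> 0"
  proof
    assume "v$j0 = 0"
    then have "v$j = 0" for j using vj[of j] by simp
    then show False using assms(1) by (simp add: vec_eq_iff)
  qed
  then have pos: "0 < cmod (v$j0)" by simp
  have "cmod c * cmod (v$j0) = cmod ((N *v v)$j0)" using assms(2) by (simp add: norm_mult)
  also have "\<dots> \<le> (\<Sum>j\<in>UNIV. cmod (N$j0$j) * cmod (v$j))"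
    unfolding mv_nth by (rule order_trans[OF norm_sum]) (simp add: norm_mult)
  also have "\<dots> \<le> (\<Sum>j\<in>UNIV. cmod (N$j0$j) * cmod (v$j0))"
    by (rule Groups_Big.sum_mono) (simp add: mult_left_mono vj)
  also have "\<dots> = (\<Sum>j\<in>UNIV. cmod (N$j0$j)) * cmod (v$j0)" by (simp add: sum_distrib_right)
  also have "(\<Sum>j\<in>UNIV. cmod (N$j0$j)) \<le> K"
    unfolding K_def by (rule member_le_sum[where f="\<lambda>i. \<Sum>j\<in>UNIV. cmod (N$i$j)"]) (auto intro: sum_nonneg)
  finally have "cmod c * cmod (v$j0) \<le> K * cmod (v$j0)" using pos by (simp add: mult_right_mono)
  then show ?thesis unfolding K_def using pos by simp
qed

lemma finite_eig_complex:
  fixes N :: "complex^'n^'n"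
  shows "finite {c. \<exists>v. v \<noteq> 0 \<and> N *v v = c *s v}"
proof -
  define K where "K = (\<Sum>i\<in>UNIV. \<Sum>j\<in>UNIV. cmod (N$i$j))"
  define c0 where "c0 = complex_of_real (K + 1)"
  obtain p where p: "\<forall>c. poly p c = det (N - mat c)" using det_poly by blast
  have "inj ((*v) (N - mat c0))"
  proof (rule injI)
    fix x y assume "(N - mat c0) *v x = (N - mat c0) *v y"
    then have "(N - mat c0) *v (x - y) = 0" by (simp add: matrix_vector_mult_diff_distrib)
    then have e: "N *v (x - y) = c0 *s (x - y)" by (simp add: matrix_vector_mult_diff_rdistrib mat_mv)
    show "x = y"
    proof (rule ccontr)
      assume "x \<noteq> y"
      then have "cmod c0 \<le> K" using eig_bound[OF _ e] unfolding K_def by simp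
      moreover have "0 \<le> K" unfolding K_def by (intro sum_nonneg) auto
      then have "cmod c0 = K + 1" unfolding c0_def by simp
      ultimately show False by simp
    qed
  qed
  moreover from this have "surj ((*v) (N - mat c0))"
    by (rule vec.linear_inj_imp_surj[OF matrix_vector_mul_linear_gen])
  ultimately have "bij ((*v) (N - mat c0))" by (simp add: bij_def)
  then have "invertible (N - mat c0)" by (simp add: invertible_eq_bij)
  then have "poly p c0 \<noteq> 0" using p invertible_det_nz[of "N - mat c0"] by simp
  then have "p \<noteq> 0" by auto
  then have "finite {c. poly p c = 0}" by (rule poly_roots_finite)
  moreover have "{c. \<exists>v. v \<noteq> 0 \<and> N *v v = c *s v} \<subseteq> {c. poly p c = 0}"
  proof
    fix c assume "c \<in> {c. \<exists>v. v \<noteq> 0 \<and> N *v v = c *s v}"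
    then obtain v where "v \<noteq> 0" "N *v v = c *s v" by blast
    then have "det (N - mat c) = 0" by (rule eig_det)
    then show "c \<in> {c. poly p c = 0}" using p by simp
  qed
  ultimately show ?thesis by (rule finite_subset[rotated])
qed

definition cvec :: "real^'n \<Rightarrow> complex^'n" where "cvec v = (\<chi> i. complex_of_real (v$i))"

lemma cvec_eig:
  fixes M :: "real^'n^'n"
  assumes "v \<noteq> 0" "M *v v = c *\<^sub>R v"
  shows "complex_of_real c \<in> complex_eigenvalues M"
proof -
  have "cvec v \<noteq> 0" using assms(1) by (simp add: cvec_def vec_eq_iff)
  moreover have "complexify M *v cvec v = complex_of_real c *s cvec v"
  proof -
    have "(complexify M *v cvec v)$i = complex_of_real ((M *v v)$i)" for i
      by (simp add: mv_nth complexify_def cvec_def)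
    then show ?thesis using assms(2) by (simp add: vec_eq_iff cvec_def)
  qed
  ultimately show ?thesis unfolding complex_eigenvalues_def by blast
qed

lemma finite_complex_eig: "finite (complex_eigenvalues M)"
  unfolding complex_eigenvalues_def by (rule finite_eig_complex)

lemma finite_real_eig: "finite (real_eigenvalues M)"
proof -
  have "real_eigenvalues M \<subseteq> Re ` complex_eigenvalues M"
    unfolding real_eigenvalues_def using cvec_eig
    by (auto intro!: image_eqI[where f=Re] cvec_eig)
  then show ?thesis using finite_complex_eig finite_surj by blast
qed

lemma tK_inner: "(transpose K *v y) \<bullet> w = y \<bullet> ((K::real^'n^'m) *v w)"
  by (simp add: dot_lmul_matrix)

lemma S_inner: "w \<bullet> ((transpose K ** K) *v v) = (K *v w) \<bullet> ((K::real^'n^'m) *v v)"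
  by (metis inner_commute matrix_vector_mul_assoc tK_inner)

lemma quad_zero:
  fixes a c :: real
  assumes "\<forall>t. 0 \<le> 2*t*a + t^2*c"
  shows "a = 0"
proof (rule ccontr)
  assume a: "a \<noteq> 0"
  then have a2: "0 < a^2" by simp
  show False
  proof (cases "c \<le> 0")
    case True
    have "0 \<le> 2*(-a)*a + (-a)^2*c" using assms by blast
    also have "\<dots> = a^2 * (c - 2)" by (simp add: power2_eq_square algebra_simps)
    also have "\<dots> < 0" using a2 True by (simp add: mult_pos_neg)
    finally show False by simp
  next
    case False
    have "0 \<le> 2*(-a/c)*a + (-a/c)^2*c" using assms by blast
    also have "\<dots> = - (a^2 / c)" using False by (simp add: power2_eq_square field_simps)
    also have "\<dots> < 0" using a2 False by simp
    finally show False by simp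
  qed
qed

lemma ext_eig_core:
  fixes r :: "real^'n"
  assumes "\<forall>t. 0 \<le> s * (2*t*(r \<bullet> r) + t^2*c)" "s = 1 \<or> s = -1"
  shows "r = 0"
proof -
  have "r \<bullet> r = 0"
  proof (cases "s = 1")
    case True then show ?thesis using assms(1) quad_zero[of "r \<bullet> r" c] by simp
  next
    case False
    then have s: "s = -1" using assms(2) by simp
    have "\<forall>t. 0 \<le> 2*t*(r \<bullet> r) + t^2*(-c)"
    proof
      fix t
      have "0 \<le> s * (2*(-t)*(r \<bullet> r) + (-t)^2*c)" using assms(1) by blast
      then show "0 \<le> 2*t*(r \<bullet> r) + t^2*(-c)" using s by (simp add: algebra_simps)
    qed
    then show ?thesis using quad_zero by blast
  qed
  then show ?thesis by simp
qed

lemma Q_expand: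
  fixes K :: "real^'n^'n"
  shows "norm (K *v (v + t *\<^sub>R r))^2 - m * norm (v + t *\<^sub>R r)^2
     = (norm (K *v v)^2 - m * norm v^2) + 2*t*(r \<bullet> ((transpose K ** K) *v v) - m * (r \<bullet> v))
       + t^2 * (norm (K *v r)^2 - m * norm r^2)"
  unfolding S_inner power2_norm_eq_inner
  by (simp add: matrix_vector_right_distrib matrix_vector_mult_scaleR inner_add_left inner_add_right
      inner_commute algebra_simps power2_eq_square)

lemma ext_eig:
  fixes K :: "real^'n^'n"
  assumes "\<forall>v. 0 \<le> s * (norm (K *v v)^2 - m * norm v^2)" "s = 1 \<or> s = -1"
    and "norm (K *v v0)^2 - m * norm v0^2 = 0"
  shows "(transpose K ** K) *v v0 = m *\<^sub>R v0"
proof -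
  define r where "r = (transpose K ** K) *v v0 - m *\<^sub>R v0"
  have "r \<bullet> ((transpose K ** K) *v v0) - m * (r \<bullet> v0) = r \<bullet> r"
    unfolding r_def by (simp add: inner_diff_right)
  then have "\<forall>t. 0 \<le> s * (2*t*(r \<bullet> r) + t^2*(norm (K *v r)^2 - m * norm r^2))"
    using assms(1) Q_expand[of K v0 _ r m] assms(3) by (metis add_0)
  then have "r = 0" using ext_eig_core assms(2) by blast
  then show ?thesis unfolding r_def by simp
qed

lemma eig_bnd_aux:
  fixes K :: "real^'n^'n"
  assumes "l \<in> real_eigenvalues (transpose K ** K)"
  obtains w where "w \<noteq> 0" "norm (K *v w)^2 = l * norm w^2"
proof -
  obtain w where w: "w \<noteq> 0" "(transpose K ** K) *v w = l *\<^sub>R w"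
    using assms unfolding real_eigenvalues_def by blast
  have "norm (K *v w)^2 = (K *v w) \<bullet> (K *v w)" by (simp add: power2_norm_eq_inner)
  also have "\<dots> = w \<bullet> ((transpose K ** K) *v w)" by (rule S_inner[symmetric])
  also have "\<dots> = l * norm w^2" unfolding w(2) by (simp add: power2_norm_eq_inner)
  finally show ?thesis using that w(1) by blast
qed

lemma rayleigh:
  fixes K :: "real^'n^'n"
  obtains m M where "\<forall>v. m * norm v^2 \<le> norm (K *v v)^2" "\<forall>v. norm (K *v v)^2 \<le> M * norm v^2"
    "m \<in> real_eigenvalues (transpose K ** K)" "M \<in> real_eigenvalues (transpose K ** K)"
    "\<forall>l\<in>real_eigenvalues (transpose K ** K). m \<le> l \<and> l \<le> M" "0 \<le> m"
proof -
  define U where "U = sphere (0::real^'n) 1"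
  define q where "q v = norm (K *v v)^2" for v
  have cU: "compact U" unfolding U_def by simp
  have neU: "U \<noteq> {}" unfolding U_def by simp
  have cq: "continuous_on U q" unfolding q_def
    by (intro continuous_intros linear_continuous_on matrix_vector_mul_linear)
  obtain vmin where vmin: "vmin \<in> U" "\<forall>y\<in>U. q vmin \<le> q y"
    using continuous_attains_inf[OF cU neU cq] by blast
  obtain vmax where vmax: "vmax \<in> U" "\<forall>y\<in>U. q y \<le> q vmax"
    using continuous_attains_sup[OF cU neU cq] by blast
  define m where "m = q vmin"
  define M where "M = q vmax"
  have scale: "q v = norm v^2 * q (inverse (norm v) *\<^sub>R v)" if "v \<noteq> 0" for v
    using that unfolding q_def
    by (simp add: matrix_vector_mult_scaleR power_mult_distrib power2_eq_square field_simps)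
  have inU: "inverse (norm v) *\<^sub>R v \<in> U" if "v \<noteq> 0" for v
    using that unfolding U_def by simp
  have lo: "m * norm v^2 \<le> q v" for v
  proof (cases "v = 0")
    case True then show ?thesis by (simp add: q_def)
  next
    case False
    then have "m \<le> q (inverse (norm v) *\<^sub>R v)" using vmin inU unfolding m_def by blast
    then have "m * norm v^2 \<le> q (inverse (norm v) *\<^sub>R v) * norm v^2" by (rule mult_right_mono) simp
    then show ?thesis using scale[OF False] by (simp add: mult.commute)
  qed
  have hi: "q v \<le> M * norm v^2" for v
  proof (cases "v = 0")
    case True then show ?thesis by (simp add: q_def)
  next
    case False
    then have "q (inverse (norm v) *\<^sub>R v) \<le> M" using vmax inU unfolding M_def by blast
    then have "q (inverse (norm v) *\<^sub>R v) * norm v^2 \<le> M * norm v^2" by (rule mult_right_mono) simp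
    then show ?thesis using scale[OF False] by (simp add: mult.commute)
  qed
  have n1: "norm vmin = 1" "norm vmax = 1" using vmin vmax unfolding U_def by auto
  have em: "(transpose K ** K) *v vmin = m *\<^sub>R vmin"
    by (rule ext_eig[where s=1]) (use lo n1 in \<open>auto simp: q_def m_def\<close>)
  have eM: "(transpose K ** K) *v vmax = M *\<^sub>R vmax"
    by (rule ext_eig[where s="-1"]) (use hi n1 in \<open>auto simp: q_def M_def\<close>)
  have "vmin \<noteq> 0" "vmax \<noteq> 0" using n1 by auto
  then have mE: "m \<in> real_eigenvalues (transpose K ** K)" and ME: "M \<in> real_eigenvalues (transpose K ** K)"
    unfolding real_eigenvalues_def using em eM by auto
  have bnd: "m \<le> l \<and> l \<le> M" if lE: "l \<in> real_eigenvalues (transpose K ** K)" for l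
  proof -
    obtain w where w: "w \<noteq> 0" "norm (K *v w)^2 = l * norm w^2"
      by (rule eig_bnd_aux[OF lE])
    have p: "0 < norm w^2" using w(1) by simp
    have "m * norm w^2 \<le> l * norm w^2" using lo[of w] w(2) unfolding q_def by simp
    then have "m \<le> l" using p by simp
    moreover have "l * norm w^2 \<le> M * norm w^2" using hi[of w] w(2) unfolding q_def by simp
    then have "l \<le> M" using p by simp
    ultimately show ?thesis by simp
  qed
  have "0 \<le> m" unfolding m_def q_def by simp
  then show ?thesis using that lo hi mE ME bnd unfolding q_def by blast
qed

lemma sigma_bounds:
  fixes K :: "real^'n^'n"
  shows "0 \<le> sigma_min K" "0 \<le> sigma_max K"
    "sigma_min K * norm v \<le> norm (K *v v)" "norm (K *v v) \<le> sigma_max K * norm v"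
proof -
  obtain m M where r: "\<forall>v. m * norm v^2 \<le> norm (K *v v)^2" "\<forall>v. norm (K *v v)^2 \<le> M * norm v^2"
    "m \<in> real_eigenvalues (transpose K ** K)" "M \<in> real_eigenvalues (transpose K ** K)"
    "\<forall>l\<in>real_eigenvalues (transpose K ** K). m \<le> l \<and> l \<le> M" "0 \<le> m"
    by (rule rayleigh)
  have "Min (real_eigenvalues (transpose K ** K)) = m"
    by (rule Min_eqI[OF finite_real_eig]) (use r in auto)
  then have smin: "sigma_min K = sqrt m" by (simp add: sigma_min_def)
  have "Max (real_eigenvalues (transpose K ** K)) = M"
    by (rule Max_eqI[OF finite_real_eig]) (use r in auto)
  then have smax: "sigma_max K = sqrt M" by (simp add: sigma_max_def)
  have M0: "0 \<le> M" using r(3,5,6) by force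
  show "0 \<le> sigma_min K" "0 \<le> sigma_max K" using smin smax r(6) M0 by auto
  have "sqrt (m * norm v^2) \<le> sqrt (norm (K *v v)^2)" using r(1) by (simp only: real_sqrt_le_iff)
  then show "sigma_min K * norm v \<le> norm (K *v v)" unfolding smin by (simp add: real_sqrt_mult)
  have "sqrt (norm (K *v v)^2) \<le> sqrt (M * norm v^2)" using r(2) by (simp only: real_sqrt_le_iff)
  then show "norm (K *v v) \<le> sigma_max K * norm v" unfolding smax by (simp add: real_sqrt_mult)
qed

lemma inner_one: "(1::real^'n) \<bullet> x = (\<Sum>i\<in>UNIV. x$i)"
  by (simp add: inner_vec_def)

lemma perron_step:
  fixes P :: "real^'n^'n"
  assumes P0: "\<forall>i j. 0 \<le> P$i$j"
    and nou: "\<not> (\<exists>u. (\<forall>i. 0 < u$i) \<and> (\<forall>i. (P *v u)$i < u$i))"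
    and e: "0 < e" "e \<le> 1"
  defines "D \<equiv> cbox 0 1 \<inter> {x::real^'n. 1 \<bullet> x = 1}"
  defines "Kb \<equiv> (\<Sum>i\<in>UNIV. \<Sum>j\<in>UNIV. P$i$j) + real CARD('n)"
  shows "\<exists>x s. x \<in> D \<and> s \<in> {1..Kb} \<and> P *v x + e *\<^sub>R 1 = s *\<^sub>R x"
proof -
  define sg where "sg x = 1 \<bullet> (P *v x + e *\<^sub>R 1)" for x :: "real^'n"
  define f where "f x = inverse (sg x) *\<^sub>R (P *v x + e *\<^sub>R 1)" for x
  have memD: "x \<in> D \<longleftrightarrow> (\<forall>i. 0 \<le> x$i \<and> x$i \<le> 1) \<and> (\<Sum>i\<in>UNIV. x$i) = 1" for x
    unfolding D_def inner_one by (simp add: mem_box_cart)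
  have Pxnn: "0 \<le> (P *v x)$i" if "x \<in> D" for x i
    using mv_mono[OF P0, of 0 x i] that memD by simp
  have comp_pos: "0 < (P *v x + e *\<^sub>R 1)$i" if "x \<in> D" for x i
    using Pxnn[OF that, of i] e by simp
  have sg_eq: "sg x = (\<Sum>i\<in>UNIV. (P *v x + e *\<^sub>R 1)$i)" for x unfolding sg_def inner_one ..
  have sg_pos: "0 < sg x" if "x \<in> D" for x
    unfolding sg_eq using Pxnn[OF that] e by (intro sum_pos) (auto simp: add_nonneg_pos)
  have comp_le: "(P *v x + e *\<^sub>R 1)$i \<le> sg x" if "x \<in> D" for x i
    unfolding sg_eq using Pxnn[OF that] e by (intro member_le_sum) auto
  have cD: "compact D" unfolding D_def
    by (intro compact_Int_closed compact_cbox closed_hyperplane)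
  have vD: "convex D" unfolding D_def by (intro convex_Int convex_box convex_hyperplane)
  have neD: "D \<noteq> {}"
  proof -
    have "inverse (real CARD('n)) *\<^sub>R (1::real^'n) \<in> D"
      unfolding memD by (simp add: field_simps)
    then show ?thesis by blast
  qed
  have fD: "f \<in> D \<rightarrow> D"
  proof
    fix x assume x: "x \<in> D"
    have fi: "f x $ i = inverse (sg x) * (P *v x + e *\<^sub>R 1)$i" for i
      unfolding f_def vector_scaleR_component real_scaleR_def ..
    have ab: "0 \<le> inverse (sg x) * a \<and> inverse (sg x) * a \<le> 1" if "0 < a" "a \<le> sg x" for a
      using that sg_pos[OF x] by (simp add: field_simps)
    have "(\<forall>i. 0 \<le> f x $ i \<and> f x $ i \<le> 1)"
      unfolding fi using ab comp_pos[OF x] comp_le[OF x] by blast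
    moreover have "(\<Sum>i\<in>UNIV. f x $ i) = 1"
      using sg_pos[OF x] unfolding f_def sg_eq
      by (simp add: sum_distrib_left[symmetric] del: vector_add_component)
    ultimately show "f x \<in> D" unfolding memD by blast
  qed
  have cf: "continuous_on D f" unfolding f_def sg_def
    by (intro continuous_intros linear_continuous_on matrix_vector_mul_linear)
       (use sg_pos[unfolded sg_def] in force)
  obtain x where x: "x \<in> D" "f x = x" using brouwer[OF cD vD neD cf fD] by blast
  define s where "s = sg x"
  have spos: "0 < s" unfolding s_def by (rule sg_pos[OF x(1)])
  have eq: "P *v x + e *\<^sub>R 1 = s *\<^sub>R x"
  proof -
    have "s *\<^sub>R x = s *\<^sub>R f x" using x(2) by simp
    also have "\<dots> = P *v x + e *\<^sub>R 1" unfolding f_def s_def using sg_pos[OF x(1)] by simp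
    finally show ?thesis by simp
  qed
  have s1: "1 \<le> s"
  proof (rule ccontr)
    assume "\<not> 1 \<le> s"
    then have s1: "s < 1" by simp
    have xpos: "0 < x$i" for i
    proof -
      have "0 < (s *\<^sub>R x)$i" using comp_pos[OF x(1), of i] eq by simp
      then show ?thesis using spos by (simp add: zero_less_mult_iff)
    qed
    have "(P *v x)$i < x$i" for i
    proof -
      have "(P *v x)$i = s * x$i - e" using arg_cong[OF eq, of "\<lambda>v. v$i"] by simp
      also have "\<dots> < x$i" using s1 xpos[of i] e(1) spos
        by (smt (verit) mult_right_less_imp_less mult_cancel_right1)
      finally show ?thesis .
    qed
    then show False using nou xpos by blast
  qed
  have sKb: "s \<le> Kb"
  proof -
    have "s = (\<Sum>i\<in>UNIV. (P *v x)$i) + e * real CARD('n)" unfolding s_def sg_eq by (simp add: sum.distrib)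
    also have "(\<Sum>i\<in>UNIV. (P *v x)$i) \<le> (\<Sum>i\<in>UNIV. \<Sum>j\<in>UNIV. P$i$j)"
      unfolding mv_nth
      by (intro Groups_Big.sum_mono mult_right_le_one_le) (use P0 x(1) memD in auto)
    also have "e * real CARD('n) \<le> real CARD('n)" using e by simp
    finally show ?thesis unfolding Kb_def by simp
  qed
  show ?thesis using x(1) s1 sKb eq by auto
qed

lemma perron_u:
  fixes P :: "real^'n^'n"
  assumes P0: "\<forall>i j. 0 \<le> P$i$j" and rho: "spectral_radius P < 1"
  shows "\<exists>u. (\<forall>i. 0 < u$i) \<and> (\<forall>i. (P *v u)$i < u$i)"
proof (rule ccontr)
  assume nou: "\<not> (\<exists>u. (\<forall>i. 0 < u$i) \<and> (\<forall>i. (P *v u)$i < u$i))"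
  define D where "D = cbox 0 1 \<inter> {x::real^'n. 1 \<bullet> x = 1}"
  define Kb where "Kb = (\<Sum>i\<in>UNIV. \<Sum>j\<in>UNIV. P$i$j) + real CARD('n)"
  define ep where "ep k = inverse (real (Suc k))" for k
  have "\<forall>k. \<exists>xs. fst xs \<in> D \<and> snd xs \<in> {1..Kb} \<and> P *v fst xs + ep k *\<^sub>R 1 = snd xs *\<^sub>R fst xs"
  proof
    fix k
    have "0 < ep k" "ep k \<le> 1" unfolding ep_def by (auto simp: field_simps)
    from perron_step[OF P0 nou this] show "\<exists>xs. fst xs \<in> D \<and> snd xs \<in> {1..Kb} \<and> P *v fst xs + ep k *\<^sub>R 1 = snd xs *\<^sub>R fst xs"
      unfolding D_def Kb_def by auto
  qed
  then obtain g where g: "\<And>k. fst (g k) \<in> D" "\<And>k. snd (g k) \<in> {1..Kb}"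
    "\<And>k. P *v fst (g k) + ep k *\<^sub>R 1 = snd (g k) *\<^sub>R fst (g k)"
    by metis
  have cC: "compact (D \<times> {1..Kb})" unfolding D_def
    by (intro compact_Times compact_Int_closed compact_cbox closed_hyperplane compact_Icc)
  have "\<forall>k. g k \<in> D \<times> {1..Kb}" using g(1,2) by (simp add: mem_Times_iff)
  then obtain l r where l: "l \<in> D \<times> {1..Kb}" "strict_mono r" "(g \<circ> r) \<longlonglongrightarrow> l"
    using compact_imp_seq_compact[OF cC] unfolding seq_compact_def by metis
  define x where "x = fst l"
  define s where "s = snd l"
  have tx: "(\<lambda>k. fst (g (r k))) \<longlonglongrightarrow> x" unfolding x_def
    using tendsto_fst[OF l(3)] by (simp add: o_def)
  have ts: "(\<lambda>k. snd (g (r k))) \<longlonglongrightarrow> s" unfolding s_def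
    using tendsto_snd[OF l(3)] by (simp add: o_def)
  have te: "(\<lambda>k. ep (r k)) \<longlonglongrightarrow> 0"
    using LIMSEQ_subseq_LIMSEQ[OF LIMSEQ_inverse_real_of_nat l(2)] unfolding ep_def by (simp add: o_def)
  have t1: "(\<lambda>k. P *v fst (g (r k)) + ep (r k) *\<^sub>R 1) \<longlonglongrightarrow> P *v x + 0 *\<^sub>R 1"
    by (intro tendsto_add tendsto_scaleR tendsto_const te
        bounded_linear.tendsto[OF matrix_vector_mul_bounded_linear tx])
  have t2: "(\<lambda>k. P *v fst (g (r k)) + ep (r k) *\<^sub>R 1) \<longlonglongrightarrow> s *\<^sub>R x"
    unfolding g(3) by (intro tendsto_scaleR ts tx)
  have eq: "P *v x = s *\<^sub>R x" using LIMSEQ_unique[OF t1 t2] by simp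
  have xD: "x \<in> D" and s1: "1 \<le> s" using l(1) unfolding x_def s_def by (auto simp: mem_Times_iff)
  have "x \<noteq> 0" using xD unfolding D_def by auto
  then have "complex_of_real s \<in> complex_eigenvalues P" using cvec_eig eq by blast
  then have "cmod (complex_of_real s) \<le> spectral_radius P"
    unfolding spectral_radius_def by (intro Max_ge finite_imageI finite_complex_eig imageI)
  then show False using s1 rho by simp
qed

lemma minv: "invertible A \<Longrightarrow> A ** matrix_inv A = mat 1 \<and> matrix_inv A ** A = mat 1"
  unfolding invertible_def matrix_inv_def by (rule someI_ex)

lemma minv_mv:
  assumes "invertible A"
  shows "A *v (matrix_inv A *v v) = v" "matrix_inv A *v (A *v v) = v"
  using minv[OF assms] by (simp_all add: matrix_vector_mul_assoc)

lemma vec_unique_C: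
  fixes A B C :: "real^'n^'n"
  assumes C: "invertible C" and bB: "\<forall>w. norm (B *v w) \<le> s * norm w"
    and sl: "s < sigma_min (A ** matrix_inv C)"
  shows "\<exists>!x. A *v x + B *v vabs (C *v x) = f"
proof -
  define Ci where "Ci = matrix_inv C"
  define D where "D = A ** Ci"
  define m where "m = sigma_min D"
  have s0: "0 \<le> s"
  proof -
    have "norm (B *v 1) \<le> s * norm (1::real^'n)" using bB by blast
    then have "0 \<le> s * norm (1::real^'n)" by (rule order_trans[OF norm_ge_zero])
    moreover have "0 < norm (1::real^'n)" by (simp add: vec_eq_iff)
    ultimately show ?thesis by (simp add: zero_le_mult_iff)
  qed
  have m0: "0 < m" using s0 sl unfolding m_def D_def Ci_def by simp
  have Dlow: "m * norm v \<le> norm (D *v v)" for v unfolding m_def by (rule sigma_bounds(3))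
  have "inj ((*v) D)"
  proof (rule injI)
    fix x y assume "D *v x = D *v y"
    then have "D *v (x - y) = 0" by (simp add: matrix_vector_mult_diff_distrib)
    then have "m * norm (x - y) \<le> 0" using Dlow[of "x - y"] by simp
    then show "x = y" using m0 by (simp add: mult_le_0_iff)
  qed
  moreover from this have "surj ((*v) D)"
    by (rule vec.linear_inj_imp_surj[OF matrix_vector_mul_linear_gen])
  ultimately have "bij ((*v) D)" by (simp add: bij_def)
  then have Dinv: "invertible D" by (simp add: invertible_eq_bij)
  define Di where "Di = matrix_inv D"
  define M where "M = Di ** B"
  define g where "g = Di *v f"
  have Mb: "\<forall>w. norm (M *v w) \<le> (s / m) * norm w"
  proof
    fix w
    have "m * norm (M *v w) \<le> norm (D *v (M *v w))" by (rule Dlow)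
    also have "D *v (M *v w) = B *v w" unfolding M_def Di_def
      by (simp add: matrix_vector_mul_assoc[symmetric] minv_mv[OF Dinv])
    finally have "m * norm (M *v w) \<le> s * norm w" using bB by (meson order_trans)
    then show "norm (M *v w) \<le> (s / m) * norm w" using m0 by (simp add: field_simps)
  qed
  have "\<exists>!y. y = g - M *v vabs y"
    by (rule fp_contr[OF _ _ Mb]) (use s0 m0 sl m_def D_def Ci_def in \<open>auto simp: field_simps\<close>)
  then obtain y0 where y0: "y0 = g - M *v vabs y0" and y0u: "\<And>y. y = g - M *v vabs y \<Longrightarrow> y = y0"
    by metis
  have DC: "D ** C = A" unfolding D_def Ci_def using minv[OF C] by (simp add: matrix_mul_assoc[symmetric])
  have Ax: "A *v x = D *v (C *v x)" for x by (simp add: matrix_vector_mul_assoc DC)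
  have equiv: "A *v x + B *v vabs (C *v x) = f \<longleftrightarrow> C *v x = g - M *v vabs (C *v x)" for x
  proof
    assume h: "A *v x + B *v vabs (C *v x) = f"
    have "C *v x = Di *v (D *v (C *v x))" unfolding Di_def by (simp add: minv_mv[OF Dinv])
    also have "\<dots> = Di *v (f - B *v vabs (C *v x))" using h Ax by (metis add_diff_cancel)
    finally show "C *v x = g - M *v vabs (C *v x)"
      unfolding g_def M_def by (simp add: matrix_vector_mult_diff_distrib matrix_vector_mul_assoc)
  next
    assume h: "C *v x = g - M *v vabs (C *v x)"
    have "A *v x = D *v (g - M *v vabs (C *v x))" using Ax h by metis
    also have "\<dots> = f - B *v vabs (C *v x)" unfolding g_def M_def Di_def
      by (simp add: matrix_vector_mult_diff_distrib matrix_vector_mul_assoc[symmetric] minv_mv[OF Dinv])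
    finally show "A *v x + B *v vabs (C *v x) = f" by simp
  qed
  show ?thesis
  proof
    have e: "C *v (Ci *v y0) = y0" unfolding Ci_def by (rule minv_mv(1)[OF C])
    have "C *v (Ci *v y0) = g - M *v vabs (C *v (Ci *v y0))" unfolding e by (rule y0)
    then show "A *v (Ci *v y0) + B *v vabs (C *v (Ci *v y0)) = f" using equiv by blast
  next
    fix x assume "A *v x + B *v vabs (C *v x) = f"
    then have "C *v x = y0" using equiv y0u by blast
    then show "x = Ci *v y0" unfolding Ci_def using minv_mv(2)[OF C] by metis
  qed
qed

lemma vec_unique_A:
  fixes A B C :: "real^'n^'n"
  assumes A: "invertible A"
    and fp: "\<exists>!z. z = (C ** matrix_inv A) *v f - (C ** matrix_inv A ** B) *v vabs z"
  shows "\<exists>!x. A *v x + B *v vabs (C *v x) = f"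
proof -
  define Ai where "Ai = matrix_inv A"
  obtain z0 where z0: "z0 = (C ** Ai) *v f - (C ** Ai ** B) *v vabs z0"
    and z0u: "\<And>z. z = (C ** Ai) *v f - (C ** Ai ** B) *v vabs z \<Longrightarrow> z = z0"
    using fp unfolding Ai_def by metis
  have sol: "A *v x + B *v vabs (C *v x) = f \<longleftrightarrow> x = Ai *v (f - B *v vabs (C *v x))" for x
  proof
    assume "A *v x + B *v vabs (C *v x) = f"
    then have "A *v x = f - B *v vabs (C *v x)" by (metis add_diff_cancel)
    then show "x = Ai *v (f - B *v vabs (C *v x))" unfolding Ai_def using minv_mv(2)[OF A] by metis
  next
    assume "x = Ai *v (f - B *v vabs (C *v x))"
    then have "A *v x = f - B *v vabs (C *v x)" unfolding Ai_def using minv_mv(1)[OF A] by metis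
    then show "A *v x + B *v vabs (C *v x) = f" by simp
  qed
  have Cx: "C *v (Ai *v (f - B *v vabs z)) = (C ** Ai) *v f - (C ** Ai ** B) *v vabs z" for z
    by (simp add: matrix_vector_mult_diff_distrib matrix_vector_mul_assoc matrix_mul_assoc)
  show ?thesis
  proof
    define x0 where "x0 = Ai *v (f - B *v vabs z0)"
    have "C *v x0 = z0" unfolding x0_def Cx using z0 by simp
    then show "A *v x0 + B *v vabs (C *v x0) = f" unfolding sol by (simp add: x0_def)
  next
    fix x assume "A *v x + B *v vabs (C *v x) = f"
    then have x: "x = Ai *v (f - B *v vabs (C *v x))" using sol by blast
    then have "C *v x = (C ** Ai) *v f - (C ** Ai ** B) *v vabs (C *v x)" using Cx by metis
    then have "C *v x = z0" by (rule z0u)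
    then show "x = Ai *v (f - B *v vabs z0)" using x by simp
  qed
qed

lemma vec_main:
  fixes A B C :: "real^'n^'n"
  assumes "(invertible C \<and> sigma_max (mat_abs B) < sigma_min (A ** matrix_inv C))
         \<or> (invertible C \<and> sigma_max B < sigma_min (A ** matrix_inv C))
         \<or> (invertible A \<and> spectral_radius (mat_abs (C ** matrix_inv A) ** mat_abs B) < 1)
         \<or> (invertible A \<and> sigma_max (C ** matrix_inv A ** B) < 1)"
  shows "\<exists>!x. A *v x + B *v vabs (C *v x) = f"
  using assms
proof (elim disjE conjE)
  assume C: "invertible C" and h: "sigma_max (mat_abs B) < sigma_min (A ** matrix_inv C)"
  have "\<forall>w. norm (B *v w) \<le> sigma_max (mat_abs B) * norm w"
  proof
    fix w
    have "norm (B *v w) \<le> norm (mat_abs B *v vabs w)"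
      by (rule norm_le_componentwise_cart) (simp only: real_norm_def, rule order_trans[OF abs_mv abs_ge_self])
    also have "\<dots> \<le> sigma_max (mat_abs B) * norm (vabs w)" by (rule sigma_bounds(4))
    finally show "norm (B *v w) \<le> sigma_max (mat_abs B) * norm w" by simp
  qed
  then show ?thesis by (rule vec_unique_C[OF C _ h])
next
  assume C: "invertible C" and h: "sigma_max B < sigma_min (A ** matrix_inv C)"
  have "\<forall>w. norm (B *v w) \<le> sigma_max B * norm w" using sigma_bounds(4) by blast
  then show ?thesis by (rule vec_unique_C[OF C _ h])
next
  assume A: "invertible A" and h: "spectral_radius (mat_abs (C ** matrix_inv A) ** mat_abs B) < 1"
  define P where "P = mat_abs (C ** matrix_inv A) ** mat_abs B"
  have P0: "\<forall>i j. 0 \<le> P$i$j" unfolding P_def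
    by (simp add: matrix_matrix_mult_def mat_abs_def sum_nonneg)
  obtain u where u: "\<forall>i. 0 < u$i" "\<forall>i. (P *v u)$i < u$i"
    using perron_u[OF P0 h[folded P_def]] by blast
  have dom: "\<forall>w i. \<bar>((C ** matrix_inv A ** B) *v w)$i\<bar> \<le> (P *v vabs w)$i"
  proof (intro allI)
    fix w i
    have "\<bar>((C ** matrix_inv A ** B) *v w)$i\<bar> = \<bar>((C ** matrix_inv A) *v (B *v w))$i\<bar>"
      by (simp add: matrix_vector_mul_assoc)
    also have "\<dots> \<le> (mat_abs (C ** matrix_inv A) *v vabs (B *v w))$i" by (rule abs_mv)
    also have "\<dots> \<le> (mat_abs (C ** matrix_inv A) *v (mat_abs B *v vabs w))$i"
      by (rule mv_mono) (auto simp: mat_abs_nonneg abs_mv)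
    also have "\<dots> = (P *v vabs w)$i" unfolding P_def by (simp add: matrix_vector_mul_assoc)
    finally show "\<bar>((C ** matrix_inv A ** B) *v w)$i\<bar> \<le> (P *v vabs w)$i" .
  qed
  show ?thesis by (rule vec_unique_A[OF A fp_pos[OF P0 dom u]])
next
  assume A: "invertible A" and h: "sigma_max (C ** matrix_inv A ** B) < 1"
  have "\<forall>w. norm ((C ** matrix_inv A ** B) *v w) \<le> sigma_max (C ** matrix_inv A ** B) * norm w"
    using sigma_bounds(4) by blast
  then show ?thesis by (rule vec_unique_A[OF A fp_contr[OF sigma_bounds(2) h]])
qed

definition colv :: "real^'n^'m \<Rightarrow> 'n \<Rightarrow> real^'m" where "colv X j = (\<chi> i. X$i$j)"

lemma colv_eq:
  fixes A B C X :: "real^'n^'n"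
  shows "colv (A ** X + B ** mat_abs (C ** X)) j = A *v colv X j + B *v vabs (C *v colv X j)"
  by (simp add: vec_eq_iff colv_def matrix_matrix_mult_def matrix_vector_mult_def mat_abs_def)

theorem theorem4p2:
  fixes A B C F :: "real^'n^'n"
  assumes "(invertible C \<and> sigma_max (mat_abs B) < sigma_min (A ** matrix_inv C))
         \<or> (invertible C \<and> sigma_max B < sigma_min (A ** matrix_inv C))
         \<or> (invertible A \<and> spectral_radius (mat_abs (C ** matrix_inv A) ** mat_abs B) < 1)
         \<or> (invertible A \<and> sigma_max (C ** matrix_inv A ** B) < 1)"
  shows "\<exists>!X :: real^'n^'n. A ** X + B ** mat_abs (C ** X) = F"
proof -
  have vm: "\<exists>!x. A *v x + B *v vabs (C *v x) = f" for f by (rule vec_main[OF assms])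
  then have "\<forall>j. \<exists>x. A *v x + B *v vabs (C *v x) = colv F j" by blast
  then obtain xf where xf: "\<And>j. A *v xf j + B *v vabs (C *v xf j) = colv F j"
    using choice[of "\<lambda>j x. A *v x + B *v vabs (C *v x) = colv F j"] by blast
  have eqiff: "A ** X + B ** mat_abs (C ** X) = F \<longleftrightarrow> (\<forall>j. A *v colv X j + B *v vabs (C *v colv X j) = colv F j)" for X
  proof
    assume "A ** X + B ** mat_abs (C ** X) = F"
    then show "\<forall>j. A *v colv X j + B *v vabs (C *v colv X j) = colv F j" using colv_eq by metis
  next
    assume "\<forall>j. A *v colv X j + B *v vabs (C *v colv X j) = colv F j"
    then have "colv (A ** X + B ** mat_abs (C ** X)) j = colv F j" for j using colv_eq by metis
    then show "A ** X + B ** mat_abs (C ** X) = F"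
      by (simp add: vec_eq_iff colv_def)
  qed
  define X0 where "X0 = (\<chi> i j. xf j $ i)"
  have cX0: "colv X0 j = xf j" for j by (simp add: X0_def colv_def vec_eq_iff)
  show ?thesis
  proof
    show "A ** X0 + B ** mat_abs (C ** X0) = F" unfolding eqiff cX0 using xf by blast
  next
    fix X assume "A ** X + B ** mat_abs (C ** X) = F"
    then have "colv X j = colv X0 j" for j
      unfolding eqiff cX0 using xf vm[of "colv F j"] by blast
    then show "X = X0" by (simp add: vec_eq_iff colv_def)
  qed
qed

end
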